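(* If $\mathbf c_1,\mathbf c_2\in\mathrm{GF}(q^m)^n$ and $d_{\mathrm R}(\mathbf c_1,\mathbf c_2)=r$, then for $0\le s\le r$, $$|B_s(\mathbf c_1)\cap B_{r-s}(\mathbf c_2)|=q^{s(r-s)}{r\brack s}.$$
   Context: The rank $\mathrm{rk}(\mathbf x)$ of $\mathbf x\in\mathrm{GF}(q^m)^n$ is the maximum number of its coordinates linearly independent over $\mathrm{GF}(q)$, and $d_{\mathrm R}(\mathbf x,\mathbf y)=\mathrm{rk}(\mathbf x-\mathbf y)$. $B_r(\mathbf x)$ is the set of vectors within rank distance $r$ of $\mathbf x$. ${r\brack s}$ is the Gaussian binomial coefficient, the number of $s$-dimensional subspaces of $\mathrm{GF}(q)^r$. *)

theory Defs
  imports Main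
begin

text \<open>GF(q) is modelled as a subfield K of a finite field 'a = GF(q^m); q = card K.
  Vectors of length n over 'a are functions nat => 'a vanishing from index n on.\<close>

definition is_subfield :: "'a::field set \<Rightarrow> bool" where
  "is_subfield K \<longleftrightarrow> 0 \<in> K \<and> 1 \<in> K \<and>
     (\<forall>x\<in>K. \<forall>y\<in>K. x + y \<in> K \<and> x * y \<in> K) \<and>
     (\<forall>x\<in>K. - x \<in> K) \<and> (\<forall>x\<in>K. x \<noteq> 0 \<longrightarrow> inverse x \<in> K)"

definition vecspace :: "nat \<Rightarrow> (nat \<Rightarrow> 'a::zero) set" where
  "vecspace n = {x. \<forall>i\<ge>n. x i = 0}"

definition lin_indep_over :: "'a::field set \<Rightarrow> (nat \<Rightarrow> 'a) \<Rightarrow> nat set \<Rightarrow> bool" where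
  "lin_indep_over K x T \<longleftrightarrow>
     (\<forall>c. (\<forall>i\<in>T. c i \<in> K) \<longrightarrow> (\<Sum>i\<in>T. c i * x i) = 0 \<longrightarrow> (\<forall>i\<in>T. c i = 0))"

definition rk :: "'a::field set \<Rightarrow> nat \<Rightarrow> (nat \<Rightarrow> 'a) \<Rightarrow> nat" where
  "rk K n x = Max {card T | T. T \<subseteq> {..<n} \<and> lin_indep_over K x T}"

definition dR :: "'a::field set \<Rightarrow> nat \<Rightarrow> (nat \<Rightarrow> 'a) \<Rightarrow> (nat \<Rightarrow> 'a) \<Rightarrow> nat" where
  "dR K n x y = rk K n (\<lambda>i. x i - y i)"

definition rball :: "'a::field set \<Rightarrow> nat \<Rightarrow> nat \<Rightarrow> (nat \<Rightarrow> 'a) \<Rightarrow> (nat \<Rightarrow> 'a) set" where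
  "rball K n r c = {x \<in> vecspace n. dR K n c x \<le> r}"

definition Kvecs :: "'a::field set \<Rightarrow> nat \<Rightarrow> (nat \<Rightarrow> 'a) set" where
  "Kvecs K r = {v. (\<forall>i<r. v i \<in> K) \<and> (\<forall>i\<ge>r. v i = 0)}"

definition Kcomb :: "(nat \<Rightarrow> 'a::field) \<Rightarrow> (nat \<Rightarrow> nat \<Rightarrow> 'a) \<Rightarrow> nat \<Rightarrow> (nat \<Rightarrow> 'a)" where
  "Kcomb c vs s = (\<lambda>i. \<Sum>j<s. c j * vs j i)"

definition is_Ksubspace :: "'a::field set \<Rightarrow> nat \<Rightarrow> (nat \<Rightarrow> 'a) set \<Rightarrow> bool" where
  "is_Ksubspace K r V \<longleftrightarrow> V \<subseteq> Kvecs K r \<and> (\<lambda>_. 0) \<in> V \<and>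
     (\<forall>u\<in>V. \<forall>v\<in>V. (\<lambda>i. u i + v i) \<in> V) \<and> (\<forall>a\<in>K. \<forall>v\<in>V. (\<lambda>i. a * v i) \<in> V)"

definition has_Kdim :: "'a::field set \<Rightarrow> (nat \<Rightarrow> 'a) set \<Rightarrow> nat \<Rightarrow> bool" where
  "has_Kdim K V s \<longleftrightarrow> (\<exists>vs. (\<forall>j<s. vs j \<in> V) \<and>
     (\<forall>c. (\<forall>j<s. c j \<in> K) \<longrightarrow> Kcomb c vs s = (\<lambda>_. 0) \<longrightarrow> (\<forall>j<s. c j = 0)) \<and>
     V = {Kcomb c vs s | c. \<forall>j<s. c j \<in> K})"

definition qbinom :: "'a::field set \<Rightarrow> nat \<Rightarrow> nat \<Rightarrow> nat" where
  "qbinom K r s = card {V. is_Ksubspace K r V \<and> has_Kdim K V s}"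

end

theory Submission
  imports Defs "HOL-Library.Function_Algebras" "HOL-Library.FuncSet"
begin


lemma sum_fun_apply_gen: "(\<Sum>j\<in>A. f j) (i::'b) = (\<Sum>j\<in>A. f j i)"
  by (induction A rule: infinite_finite_induct) auto

lemma subfield_props:
  assumes "is_subfield K"
  shows "0 \<in> K" "1 \<in> K" "x \<in> K \<Longrightarrow> y \<in> K \<Longrightarrow> x + y \<in> K"
    "x \<in> K \<Longrightarrow> y \<in> K \<Longrightarrow> x * y \<in> K" "x \<in> K \<Longrightarrow> - x \<in> K"
    "x \<in> K \<Longrightarrow> y \<in> K \<Longrightarrow> x - y \<in> K"
    "x \<in> K \<Longrightarrow> y \<in> K \<Longrightarrow> x / y \<in> K"
proof -
  note a = assms[unfolded is_subfield_def]
  show "0 \<in> K" "1 \<in> K" using a by auto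
  show "x \<in> K \<Longrightarrow> y \<in> K \<Longrightarrow> x + y \<in> K" using a by auto
  show "x \<in> K \<Longrightarrow> y \<in> K \<Longrightarrow> x * y \<in> K" using a by auto
  show "x \<in> K \<Longrightarrow> - x \<in> K" using a by auto
  have ad: "\<And>x y. x \<in> K \<Longrightarrow> y \<in> K \<Longrightarrow> x + y \<in> K" and ng: "\<And>x. x \<in> K \<Longrightarrow> - x \<in> K"
    and ml: "\<And>x y. x \<in> K \<Longrightarrow> y \<in> K \<Longrightarrow> x * y \<in> K"
    and iv: "\<And>x. x \<in> K \<Longrightarrow> x \<noteq> 0 \<Longrightarrow> inverse x \<in> K" and z: "0 \<in> K" using a by blast+
  show "x \<in> K \<Longrightarrow> y \<in> K \<Longrightarrow> x - y \<in> K" unfolding diff_conv_add_uminus using ad ng by blast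
  show "x \<in> K \<Longrightarrow> y \<in> K \<Longrightarrow> x / y \<in> K"
  proof (cases "y = 0")
    case True thus "x \<in> K \<Longrightarrow> y \<in> K \<Longrightarrow> x / y \<in> K" using z by simp
  next
    case False thus "x \<in> K \<Longrightarrow> y \<in> K \<Longrightarrow> x / y \<in> K" unfolding divide_inverse using ml iv by blast
  qed
qed

locale kmod =
  fixes K :: "'a::field set" and sm :: "'a \<Rightarrow> 'b::ab_group_add \<Rightarrow> 'b"
  assumes sub: "is_subfield K" and finK: "finite K"
  and sm_addr: "sm a (x + y) = sm a x + sm a y"
  and sm_addl: "sm (a + b) x = sm a x + sm b x"
  and sm_mult: "sm a (sm b x) = sm (a * b) x"
  and sm_one: "sm 1 x = x"
begin

lemma sm_zero[simp]: "sm 0 x = 0"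
  using sm_addl[of 0 0 x] by simp
lemma sm_zero2[simp]: "sm a 0 = 0"
  using sm_addr[of a 0 0] by simp
lemma sm_neg: "sm (- a) x = - sm a x"
  using sm_addl[of a "-a" x] by (simp add: eq_neg_iff_add_eq_0 add.commute)
lemma sm_diffl: "sm (a - b) x = sm a x - sm b x"
  using sm_addl[of a "-b" x] sm_neg by simp
lemma sm_negr: "sm a (- x) = - sm a x"
  using sm_addr[of a x "-x"] by (simp add: eq_neg_iff_add_eq_0 add.commute)
lemma sm_diffr: "sm a (x - y) = sm a x - sm a y"
  using sm_addr[of a x "-y"] sm_negr by simp
lemma sm_sum: "sm a (\<Sum>i\<in>T. f i) = (\<Sum>i\<in>T. sm a (f i))"
  by (induction T rule: infinite_finite_induct) (auto simp: sm_addr)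

lemmas Kc = subfield_props[OF sub]

lemma q_ge2: "card K \<ge> 2"
proof -
  have "{0,1} \<subseteq> K" using Kc by auto
  hence "card {0::'a,1} \<le> card K" by (intro card_mono finK)
  thus ?thesis by simp
qed

definition lc :: "nat set \<Rightarrow> (nat \<Rightarrow> 'a) \<Rightarrow> (nat \<Rightarrow> 'b) \<Rightarrow> 'b" where
  "lc T c v = (\<Sum>i\<in>T. sm (c i) (v i))"
definition span :: "nat set \<Rightarrow> (nat \<Rightarrow> 'b) \<Rightarrow> 'b set" where
  "span T v = {lc T c v | c. \<forall>i\<in>T. c i \<in> K}"
definition indep :: "nat set \<Rightarrow> (nat \<Rightarrow> 'b) \<Rightarrow> bool" where
  "indep T v \<longleftrightarrow> (\<forall>c. (\<forall>i\<in>T. c i \<in> K) \<longrightarrow> lc T c v = 0 \<longrightarrow> (\<forall>i\<in>T. c i = 0))"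
definition subsp :: "'b set \<Rightarrow> bool" where
  "subsp S \<longleftrightarrow> 0 \<in> S \<and> (\<forall>x\<in>S. \<forall>y\<in>S. x + y \<in> S) \<and> (\<forall>a\<in>K. \<forall>x\<in>S. sm a x \<in> S)"

lemma lc_cong: "(\<And>i. i \<in> T \<Longrightarrow> c i = c' i) \<Longrightarrow> (\<And>i. i \<in> T \<Longrightarrow> v i = v' i) \<Longrightarrow> lc T c v = lc T c' v'"
  unfolding lc_def by (rule sum.cong) auto
lemma span_cong: assumes "\<And>i. i \<in> T \<Longrightarrow> v i = v' i" shows "span T v = span T v'"
proof -
  have "\<And>c. lc T c v = lc T c v'" using assms by (intro lc_cong) auto
  thus ?thesis unfolding span_def by simp
qed
lemma indep_cong: assumes "\<And>i. i \<in> T \<Longrightarrow> v i = v' i" shows "indep T v = indep T v'"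
proof -
  have "\<And>c. lc T c v = lc T c v'" using assms by (intro lc_cong) auto
  thus ?thesis unfolding indep_def by simp
qed

lemma lc_add: "lc T c v + lc T d v = lc T (\<lambda>i. c i + d i) v"
  unfolding lc_def by (simp add: sum.distrib sm_addl)
lemma lc_diff: "lc T c v - lc T d v = lc T (\<lambda>i. c i - d i) v"
  unfolding lc_def by (simp add: sum_subtractf sm_diffl)
lemma lc_neg: "- lc T c v = lc T (\<lambda>i. - c i) v"
  unfolding lc_def by (simp add: sum_negf sm_neg)
lemma lc_sm: "sm a (lc T c v) = lc T (\<lambda>i. a * c i) v"
  unfolding lc_def by (simp add: sm_sum sm_mult)
lemma lc_zero: "lc T (\<lambda>_. 0) v = 0"
  unfolding lc_def by simp

lemma subsp_span: "subsp (span T v)"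
  unfolding subsp_def
proof (intro conjI ballI)
  have "lc T (\<lambda>_. 0) v \<in> span T v" unfolding span_def using Kc(1) by blast
  thus "0 \<in> span T v" by (simp add: lc_zero)
next
  fix x y assume "x \<in> span T v" "y \<in> span T v"
  then obtain c d where cd: "x = lc T c v" "y = lc T d v" "\<forall>i\<in>T. c i \<in> K" "\<forall>i\<in>T. d i \<in> K"
    unfolding span_def by blast
  have "lc T (\<lambda>i. c i + d i) v \<in> span T v" unfolding span_def using cd(3,4) Kc(3) by blast
  thus "x + y \<in> span T v" using cd(1,2) lc_add by simp
next
  fix a x assume a: "a \<in> K" and "x \<in> span T v"
  then obtain c where c: "x = lc T c v" "\<forall>i\<in>T. c i \<in> K" unfolding span_def by blast
  have "lc T (\<lambda>i. a * c i) v \<in> span T v" unfolding span_def using c(2) a Kc(4) by blast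
  thus "sm a x \<in> span T v" using c(1) lc_sm by simp
qed

lemma subsp_neg: assumes "subsp S" "x \<in> S" shows "- x \<in> S"
proof -
  have "sm (-1) x \<in> S" using assms Kc(2,5) unfolding subsp_def by blast
  thus ?thesis by (simp add: sm_neg sm_one)
qed
lemma subsp_add: "subsp S \<Longrightarrow> x \<in> S \<Longrightarrow> y \<in> S \<Longrightarrow> x + y \<in> S"
  unfolding subsp_def by blast
lemma subsp_sm: "subsp S \<Longrightarrow> a \<in> K \<Longrightarrow> y \<in> S \<Longrightarrow> sm a y \<in> S"
  unfolding subsp_def by blast
lemma subsp_0: "subsp S \<Longrightarrow> 0 \<in> S"
  unfolding subsp_def by blast
lemma subsp_diff: assumes "subsp S" "x \<in> S" "y \<in> S" shows "x - y \<in> S"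
  unfolding diff_conv_add_uminus using subsp_add subsp_neg assms by blast

lemma subsp_lc: "subsp S \<Longrightarrow> (\<And>i. i \<in> T \<Longrightarrow> v i \<in> S) \<Longrightarrow> (\<And>i. i \<in> T \<Longrightarrow> c i \<in> K) \<Longrightarrow> lc T c v \<in> S"
  unfolding lc_def
proof (induction T rule: infinite_finite_induct)
  case (infinite A) thus ?case using subsp_0 by simp
next
  case empty thus ?case using subsp_0 by simp
next
  case (insert x F)
  have "sm (c x) (v x) \<in> S" using insert.prems subsp_sm by blast
  moreover have "(\<Sum>i\<in>F. sm (c i) (v i)) \<in> S" using insert by blast
  ultimately show ?case using insert.hyps insert.prems(1) subsp_add by simp
qed

lemma span_mono: "(\<And>i. i \<in> T \<Longrightarrow> v i \<in> S) \<Longrightarrow> subsp S \<Longrightarrow> span T v \<subseteq> S"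
  unfolding span_def using subsp_lc by blast

lemma in_span: assumes "i \<in> T" "finite T" shows "v i \<in> span T v"
proof -
  have "lc T (\<lambda>j. if j = i then 1 else 0) v = v i"
    unfolding lc_def using assms by (simp add: sm_one if_distrib[of "\<lambda>a. sm a _"] sum.delta cong: if_cong)
  moreover have "\<forall>j\<in>T. (if j = i then 1 else 0) \<in> K" using Kc by auto
  ultimately show ?thesis unfolding span_def by force
qed

lemma span_image: "span T v = (\<lambda>c. lc T c v) ` (PiE T (\<lambda>_. K))"
proof
  show "span T v \<subseteq> (\<lambda>c. lc T c v) ` (PiE T (\<lambda>_. K))"
  proof
    fix x assume "x \<in> span T v"
    then obtain c where c: "x = lc T c v" "\<forall>i\<in>T. c i \<in> K" unfolding span_def by auto
    have "restrict c T \<in> PiE T (\<lambda>_. K)" using c by auto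
    moreover have "lc T (restrict c T) v = x" using c by (auto intro: lc_cong)
    ultimately show "x \<in> (\<lambda>c. lc T c v) ` (PiE T (\<lambda>_. K))" by force
  qed
  show "(\<lambda>c. lc T c v) ` (PiE T (\<lambda>_. K)) \<subseteq> span T v"
    unfolding span_def by (auto simp: PiE_iff)
qed

lemma finite_span: "finite T \<Longrightarrow> finite (span T v)"
  unfolding span_image using finK by (auto intro: finite_PiE)

lemma card_span_le: "finite T \<Longrightarrow> card (span T v) \<le> card K ^ card T"
  unfolding span_image using finK card_image_le[OF finite_PiE, of T "\<lambda>_. K"]
  by (simp add: card_PiE)

lemma card_span_indep: assumes "finite T" "indep T v" shows "card (span T v) = card K ^ card T"
proof -
  have "inj_on (\<lambda>c. lc T c v) (PiE T (\<lambda>_. K))"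
  proof (rule inj_onI)
    fix c d assume c: "c \<in> PiE T (\<lambda>_. K)" and d: "d \<in> PiE T (\<lambda>_. K)" and eq: "lc T c v = lc T d v"
    have "lc T (\<lambda>i. c i - d i) v = 0" using eq lc_diff[of T c v d] by simp
    moreover have "\<forall>i\<in>T. c i - d i \<in> K" using c d Kc(6) by (auto simp: PiE_iff)
    ultimately have "\<forall>i\<in>T. c i - d i = 0" using assms(2)[unfolded indep_def, rule_format, of "\<lambda>i. c i - d i"] by blast
    thus "c = d" using c d by (intro PiE_ext) auto
  qed
  thus ?thesis unfolding span_image using assms by (simp add: card_image card_PiE)
qed

lemma indep_of_card: assumes "finite T" "card K ^ card T \<le> card (span T v)" shows "indep T v"
proof -
  have fin: "finite (PiE T (\<lambda>_. K))" using assms finK by (auto intro: finite_PiE)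
  have "card ((\<lambda>c. lc T c v) ` (PiE T (\<lambda>_. K))) = card (PiE T (\<lambda>_. K))"
    using assms card_image_le[OF fin, of "\<lambda>c. lc T c v"] unfolding span_image
    by (simp add: card_PiE)
  hence inj: "inj_on (\<lambda>c. lc T c v) (PiE T (\<lambda>_. K))" using inj_on_iff_eq_card[OF fin] by blast
  show ?thesis unfolding indep_def
  proof (intro allI impI ballI)
    fix c i assume c: "\<forall>i\<in>T. c i \<in> K" "lc T c v = 0" and i: "i \<in> T"
    have "restrict c T \<in> PiE T (\<lambda>_. K)" "restrict (\<lambda>_. 0) T \<in> PiE T (\<lambda>_. K)" using c Kc by auto
    moreover have "lc T (restrict c T) v = lc T (restrict (\<lambda>_. 0) T) v"
      using c lc_zero[of T v] by (metis (no_types, lifting) lc_cong restrict_apply')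
    ultimately have "restrict c T = restrict (\<lambda>_. 0) T" using inj by (meson inj_onD)
    thus "c i = 0" using i by (metis restrict_apply')
  qed
qed

lemma indep_card_le: assumes "finite T" "finite D" "indep T v" "\<And>i. i \<in> T \<Longrightarrow> v i \<in> span D w"
  shows "card T \<le> card D"
proof -
  have "span T v \<subseteq> span D w" using assms(4) subsp_span by (rule span_mono)
  hence "card (span T v) \<le> card (span D w)" using finite_span[OF assms(2)] by (rule card_mono[rotated])
  hence "card K ^ card T \<le> card K ^ card D"
    using card_span_indep[OF assms(1,3)] card_span_le[OF assms(2), of w] by linarith
  thus ?thesis using q_ge2 by (simp add: power_le_imp_le_exp)
qed

lemma indep_subset: "indep T v \<Longrightarrow> S \<subseteq> T \<Longrightarrow> finite T \<Longrightarrow> indep S v"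
  unfolding indep_def
proof (intro allI impI ballI)
  fix c i assume h: "\<forall>c. (\<forall>i\<in>T. c i \<in> K) \<longrightarrow> lc T c v = 0 \<longrightarrow> (\<forall>i\<in>T. c i = 0)"
    "S \<subseteq> T" "finite T" "\<forall>i\<in>S. c i \<in> K" "lc S c v = 0" "i \<in> S"
  let ?d = "\<lambda>j. if j \<in> S then c j else 0"
  have "lc T ?d v = lc S c v" unfolding lc_def using h(2,3)
    by (simp add: if_distrib[of "\<lambda>a. sm a _"] sum.If_cases Int_absorb1 cong: if_cong)
  moreover have "\<forall>j\<in>T. ?d j \<in> K" using h Kc by auto
  ultimately have "?d i = 0" using h(1)[rule_format, of ?d i] h(2,5,6) by auto
  thus "c i = 0" using h by simp
qed

lemma indep_insert: assumes "i \<notin> T" "finite T"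
  shows "indep (insert i T) v \<longleftrightarrow> indep T v \<and> v i \<notin> span T v"
proof
  assume ind: "indep (insert i T) v"
  have "indep T v" using indep_subset[OF ind] assms by auto
  moreover have "v i \<notin> span T v"
  proof
    assume "v i \<in> span T v"
    then obtain c where c: "v i = lc T c v" "\<forall>j\<in>T. c j \<in> K" unfolding span_def by auto
    let ?d = "\<lambda>j. if j = i then -1 else c j"
    have "lc (insert i T) ?d v = sm (-1) (v i) + lc T ?d v" using assms unfolding lc_def by simp
    also have "lc T ?d v = lc T c v" using assms by (intro lc_cong) auto
    finally have "lc (insert i T) ?d v = 0" using c sm_neg[of 1] sm_one by simp
    moreover have "\<forall>j\<in>insert i T. ?d j \<in> K" using c Kc by auto
    ultimately have "?d i = 0" using ind[unfolded indep_def, rule_format, of ?d i] by blast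
    thus False by simp
  qed
  ultimately show "indep T v \<and> v i \<notin> span T v" by blast
next
  assume h: "indep T v \<and> v i \<notin> span T v"
  show "indep (insert i T) v" unfolding indep_def
  proof (intro allI impI)
    fix c assume c: "\<forall>j\<in>insert i T. c j \<in> K" "lc (insert i T) c v = 0"
    have eq: "sm (c i) (v i) + lc T c v = 0" using c assms unfolding lc_def by simp
    have ci: "c i = 0"
    proof (rule ccontr)
      assume nz: "c i \<noteq> 0"
      have "v i = sm (inverse (c i)) (sm (c i) (v i))" using nz by (simp add: sm_mult sm_one)
      also have "sm (c i) (v i) = - lc T c v" using eq by (simp add: eq_neg_iff_add_eq_0)
      also have "sm (inverse (c i)) (- lc T c v) = lc T (\<lambda>j. inverse (c i) * - c j) v"
        by (simp add: lc_neg lc_sm)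
      finally have "v i = lc T (\<lambda>j. inverse (c i) * - c j) v" .
      moreover have "\<forall>j\<in>T. inverse (c i) * - c j \<in> K" using c Kc
        by (metis divide_inverse_commute insertCI subfield_props(5,7) sub mult.commute)
      ultimately have "v i \<in> span T v" unfolding span_def by blast
      thus False using h by blast
    qed
    hence "lc T c v = 0" using eq by simp
    hence "\<forall>j\<in>T. c j = 0" using h c unfolding indep_def by blast
    thus "\<forall>j\<in>insert i T. c j = 0" using ci by blast
  qed
qed

lemma span_sub: "S \<subseteq> T \<Longrightarrow> finite T \<Longrightarrow> span S f \<subseteq> span T f"
  by (rule span_mono[OF _ subsp_span]) (auto intro: in_span)

lemma span_eq_card: assumes "finite I" "finite D" "indep I f" "\<And>i. i \<in> I \<Longrightarrow> f i \<in> span D b"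
  "card I = card D" shows "span I f = span D b"
proof
  show "span I f \<subseteq> span D b" using assms(4) subsp_span by (rule span_mono)
  show "span D b \<subseteq> span I f"
  proof (rule ccontr)
    assume "\<not> span D b \<subseteq> span I f"
    then obtain y where y: "y \<in> span D b" "y \<notin> span I f" by blast
    obtain j :: nat where j: "j \<notin> I" using assms(1) ex_new_if_finite[OF infinite_UNIV_nat] by blast
    let ?g = "f(j := y)"
    have e1: "indep I ?g = indep I f" using j by (intro indep_cong) auto
    have e2: "span I ?g = span I f" using j by (intro span_cong) auto
    have "indep (insert j I) ?g" using indep_insert[OF j assms(1)] e1 e2 assms(3) y by simp
    moreover have "\<And>i. i \<in> insert j I \<Longrightarrow> ?g i \<in> span D b" using assms(4) y by auto
    ultimately have "card (insert j I) \<le> card D"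
      using indep_card_le[of "insert j I" D ?g b] assms(1,2) by blast
    thus False using j assms(1,5) by simp
  qed
qed

lemma lc_split: assumes "s \<le> r" shows "lc {..<r} c f = lc {..<s} c f + lc {s..<r} c f"
proof -
  have "{..<r} = {..<s} \<union> {s..<r}" using assms by auto
  moreover have "(\<Sum>i\<in>{..<s} \<union> {s..<r}. sm (c i) (f i)) = (\<Sum>i\<in>{..<s}. sm (c i) (f i)) + (\<Sum>i\<in>{s..<r}. sm (c i) (f i))"
    by (rule sum.union_disjoint) auto
  ultimately show ?thesis unfolding lc_def by simp
qed

lemma span_inter: assumes "finite A" "finite B" "A \<inter> B = {}" "indep (A \<union> B) f"
  "y \<in> span A f" "y \<in> span B f" shows "y = 0"
proof -
  obtain c where c: "y = lc A c f" "\<forall>i\<in>A. c i \<in> K" using assms(5) unfolding span_def by blast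
  obtain d where d: "y = lc B d f" "\<forall>i\<in>B. d i \<in> K" using assms(6) unfolding span_def by blast
  let ?e = "\<lambda>i. if i \<in> A then c i else - d i"
  have "lc (A \<union> B) ?e f = lc A ?e f + lc B ?e f" unfolding lc_def using assms(1-3) by (simp add: sum.union_disjoint)
  also have "lc A ?e f = lc A c f" by (rule lc_cong) auto
  also have "lc B ?e f = lc B (\<lambda>i. - d i) f" using assms(3) by (intro lc_cong) auto
  also have "\<dots> = - y" using d(1) lc_neg by simp
  finally have "lc (A \<union> B) ?e f = 0" using c(1) by simp
  moreover have "\<forall>i\<in>A \<union> B. ?e i \<in> K" using c(2) d(2) Kc(5) by auto
  ultimately have "\<forall>i\<in>A \<union> B. ?e i = 0" using assms(4)[unfolded indep_def, rule_format, of ?e] by blast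
  hence "\<forall>i\<in>A. c i = 0" by (metis (no_types, lifting) UnI1)
  hence "lc A c f = lc A (\<lambda>_. 0) f" by (intro lc_cong) auto
  thus ?thesis using c(1) lc_zero by simp
qed

lemma count_indep: assumes "finite D" "indep D b" "finite I"
  shows "card {f \<in> PiE I (\<lambda>_. span D b). indep I f} = (\<Prod>i<card I. card K ^ card D - card K ^ i)"
  using assms(3)
proof (induction I rule: finite_induct)
  case empty
  have "{f \<in> PiE {} (\<lambda>_. span D b). indep {} f} = {\<lambda>_. undefined}" by (auto simp: indep_def)
  thus ?case by simp
next
  case (insert x I)
  let ?V = "span D b"
  let ?A = "{f \<in> PiE I (\<lambda>_. ?V). indep I f}"
  let ?B = "Sigma ?A (\<lambda>g. ?V - span I g)"
  let ?h = "\<lambda>(g, y). g(x := y)"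
  have finV: "finite ?V" using assms(1) by (rule finite_span)
  have cV: "card ?V = card K ^ card D" using assms(1,2) by (rule card_span_indep)
  have eq: "{f \<in> PiE (insert x I) (\<lambda>_. ?V). indep (insert x I) f} = ?h ` ?B"
  proof
    show "{f \<in> PiE (insert x I) (\<lambda>_. ?V). indep (insert x I) f} \<subseteq> ?h ` ?B"
    proof
      fix f assume f: "f \<in> {f \<in> PiE (insert x I) (\<lambda>_. ?V). indep (insert x I) f}"
      let ?g = "f(x := undefined)"
      have g1: "?g \<in> PiE I (\<lambda>_. ?V)" using f insert.hyps by (auto simp: PiE_iff extensional_def)
      have e1: "indep I ?g = indep I f" using insert.hyps by (intro indep_cong) auto
      have e2: "span I ?g = span I f" using insert.hyps by (intro span_cong) auto
      have fi: "indep I f \<and> f x \<notin> span I f" using f indep_insert[OF insert.hyps(2,1)] by blast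
      have "(?g, f x) \<in> ?B" using g1 e1 e2 fi f by (auto simp: PiE_iff)
      moreover have "f = ?h (?g, f x)" by simp
      ultimately show "f \<in> ?h ` ?B" by blast
    qed
    show "?h ` ?B \<subseteq> {f \<in> PiE (insert x I) (\<lambda>_. ?V). indep (insert x I) f}"
    proof
      fix f assume "f \<in> ?h ` ?B"
      then obtain g y where gy: "g \<in> ?A" "y \<in> ?V" "y \<notin> span I g" "f = g(x := y)" by auto
      have e1: "indep I f = indep I g" using insert.hyps gy(4) by (intro indep_cong) auto
      have e2: "span I f = span I g" using insert.hyps gy(4) by (intro span_cong) auto
      have "indep (insert x I) f" using indep_insert[OF insert.hyps(2,1)] e1 e2 gy by simp
      moreover have "f \<in> PiE (insert x I) (\<lambda>_. ?V)" using gy by (auto simp: PiE_iff extensional_def)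
      ultimately show "f \<in> {f \<in> PiE (insert x I) (\<lambda>_. ?V). indep (insert x I) f}" by blast
    qed
  qed
  have inj: "inj_on ?h ?B"
  proof (rule inj_onI)
    fix p p' assume p: "p \<in> ?B" "p' \<in> ?B" "?h p = ?h p'"
    obtain g y where g: "p = (g, y)" by force
    obtain g' y' where g': "p' = (g', y')" by force
    have gx: "g x = undefined" "g' x = undefined" using p g g' insert.hyps by (auto simp: PiE_iff extensional_def)
    have "g(x := y) = g'(x := y')" using p(3) g g' by simp
    hence "y = y'" "g = g'" using gx by (metis fun_upd_same, metis fun_upd_triv fun_upd_upd)
    thus "p = p'" using g g' by simp
  qed
  have finA: "finite ?A" using finite_PiE[OF insert.hyps(1), of "\<lambda>_. ?V"] finV by simp
  have cB: "card ?B = card ?A * (card K ^ card D - card K ^ card I)"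
  proof -
    have "\<And>g. g \<in> ?A \<Longrightarrow> card (?V - span I g) = card K ^ card D - card K ^ card I"
    proof -
      fix g assume g: "g \<in> ?A"
      have "span I g \<subseteq> ?V" using g by (intro span_mono[OF _ subsp_span]) auto
      moreover have "card (span I g) = card K ^ card I" using g insert.hyps by (intro card_span_indep) auto
      ultimately show "card (?V - span I g) = card K ^ card D - card K ^ card I"
        using cV finV by (simp add: card_Diff_subset finite_subset)
    qed
    hence "card ?B = (\<Sum>g\<in>?A. card K ^ card D - card K ^ card I)"
      using finA finV by (simp add: card_SigmaI)
    thus ?thesis by simp
  qed
  show ?case unfolding eq card_image[OF inj] cB insert.IH using insert.hyps by simp
qed

end



lemma kmod_field: "is_subfield (K::'a::{field,finite} set) \<Longrightarrow> kmod K ((*) :: 'a \<Rightarrow> 'a \<Rightarrow> 'a)"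
  by unfold_locales (auto simp: ring_distribs)

lemma kmod_fun: "is_subfield (K::'a::{field,finite} set) \<Longrightarrow> kmod K (\<lambda>a (v::nat\<Rightarrow>'a) i. a * v i)"
  by unfold_locales (auto simp: ring_distribs fun_eq_iff)

lemma finite_vecspace: "finite (vecspace n :: (nat \<Rightarrow> 'a::{finite,zero}) set)"
proof -
  have "vecspace n \<subseteq> (\<lambda>g i. if i < n then g i else 0) ` (PiE {..<n} (\<lambda>_. (UNIV::'a set)))"
  proof
    fix x :: "nat \<Rightarrow> 'a" assume x: "x \<in> vecspace n"
    have "x = (\<lambda>i. if i < n then restrict x {..<n} i else 0)" using x by (auto simp: vecspace_def fun_eq_iff)
    moreover have "restrict x {..<n} \<in> PiE {..<n} (\<lambda>_. UNIV)" by simp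
    ultimately show "x \<in> (\<lambda>g i. if i < n then g i else 0) ` (PiE {..<n} (\<lambda>_. (UNIV::'a set)))" by blast
  qed
  moreover have "finite ((\<lambda>g i. if i < n then g i else 0) ` (PiE {..<n} (\<lambda>_. (UNIV::'a set))))"
    by (intro finite_imageI finite_PiE) auto
  ultimately show ?thesis by (rule finite_subset)
qed

context
  fixes K :: "'a::{field,finite} set"
  assumes sf: "is_subfield K"
begin

interpretation F: kmod K "(*) :: 'a \<Rightarrow> 'a \<Rightarrow> 'a" by (rule kmod_field[OF sf])

lemma lin_indep_eq: "lin_indep_over K x T = F.indep T x"
  unfolding lin_indep_over_def F.indep_def F.lc_def by simp

lemma rk_set_fin: "finite {card T | T. T \<subseteq> {..<n} \<and> lin_indep_over K x T}"
proof -
  have "{card T | T. T \<subseteq> {..<n} \<and> lin_indep_over K x T} \<subseteq> card ` Pow {..<n}" by auto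
  thus ?thesis by (rule finite_subset) auto
qed

lemma rk_set_ne: "{card T | T. T \<subseteq> {..<n} \<and> lin_indep_over K x T} \<noteq> {}"
proof -
  have "lin_indep_over K x {}" unfolding lin_indep_over_def by simp
  thus ?thesis by blast
qed

lemma rk_le: "(\<And>T. T \<subseteq> {..<n} \<Longrightarrow> F.indep T x \<Longrightarrow> card T \<le> k) \<Longrightarrow> rk K n x \<le> k"
  unfolding rk_def using rk_set_fin rk_set_ne by (auto simp: lin_indep_eq)

lemma rk_ge: "T \<subseteq> {..<n} \<Longrightarrow> F.indep T x \<Longrightarrow> card T \<le> rk K n x"
  unfolding rk_def using rk_set_fin by (intro Max_ge) (auto simp: lin_indep_eq)

lemma rk_basis: "\<exists>T. T \<subseteq> {..<n} \<and> F.indep T x \<and> card T = rk K n x \<and> (\<forall>i<n. x i \<in> F.span T x)"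
proof -
  have "rk K n x \<in> {card T | T. T \<subseteq> {..<n} \<and> lin_indep_over K x T}"
    unfolding rk_def using rk_set_fin rk_set_ne by (rule Max_in)
  then obtain T where T: "T \<subseteq> {..<n}" "F.indep T x" "card T = rk K n x" by (auto simp: lin_indep_eq)
  have fT: "finite T" using T(1) finite_subset by blast
  have "\<forall>i<n. x i \<in> F.span T x"
  proof (intro allI impI)
    fix i assume i: "i < n"
    show "x i \<in> F.span T x"
    proof (cases "i \<in> T")
      case True thus ?thesis using fT by (rule F.in_span)
    next
      case False
      show ?thesis
      proof (rule ccontr)
        assume "x i \<notin> F.span T x"
        hence "F.indep (insert i T) x" using F.indep_insert[OF False fT] T(2) by blast
        hence "card (insert i T) \<le> rk K n x" using T(1) i by (intro rk_ge) auto
        thus False using T(3) False fT by simp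
      qed
    qed
  qed
  thus ?thesis using T by blast
qed

end

definition hq :: "nat \<Rightarrow> nat \<Rightarrow> nat \<Rightarrow> nat" where
  "hq q d k = (\<Prod>i<k. q ^ d - q ^ i)"

lemma prod_split_nat: "(\<Prod>i<s + t. f i) = (\<Prod>i<s. f i) * (\<Prod>j<t. f (s + j :: nat))"
  by (induction t) (auto simp: mult.assoc)

lemma hq_split: assumes "s \<le> r"
  shows "hq q r r = q ^ (s * (r - s)) * hq q r s * hq q (r - s) (r - s)"
proof -
  obtain t where t: "r = s + t" using assms le_Suc_ex by blast
  have "hq q r r = hq q r s * (\<Prod>j<t. q ^ r - q ^ (s + j))"
    unfolding hq_def using prod_split_nat[where s=s and t=t] t by simp
  also have "(\<Prod>j<t. q ^ r - q ^ (s + j)) = (\<Prod>j<t. q ^ s * (q ^ t - q ^ j))"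
    using t by (intro prod.cong) (auto simp: power_add diff_mult_distrib2)
  also have "\<dots> = q ^ (s * t) * hq q t t"
    unfolding hq_def by (simp add: prod.distrib power_mult)
  finally show ?thesis using t by simp
qed

lemma hq_pos: "q \<ge> 2 \<Longrightarrow> hq q k k > 0"
  unfolding hq_def by (intro prod_pos) (auto intro: power_strict_increasing)




context
  fixes K :: "'a::{field,finite} set"
  assumes sf: "is_subfield K"
begin

interpretation G: kmod K "\<lambda>a (v::nat\<Rightarrow>'a) i. a * v i" by (rule kmod_fun[OF sf])

definition std :: "nat \<Rightarrow> nat \<Rightarrow> 'a" where "std j = (\<lambda>i. if i = j then 1 else 0)"

lemma G_lc_apply: "G.lc T c v i = (\<Sum>j\<in>T. c j * v j i)"
  unfolding G.lc_def by (simp add: sum_fun_apply_gen)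

lemma Kcomb_eq: "Kcomb c vs s = G.lc {..<s} c vs"
  unfolding Kcomb_def by (simp add: fun_eq_iff G_lc_apply)

lemma std_lc: "G.lc {..<r} c std i = (if i < r then c i else 0)"
  unfolding G_lc_apply std_def by (simp add: if_distrib[of "\<lambda>a. _ * a"] cong: if_cong)

lemma Kvecs_span: "Kvecs K r = G.span {..<r} std"
proof
  show "Kvecs K r \<subseteq> G.span {..<r} std"
  proof
    fix v assume v: "v \<in> Kvecs K r"
    have "v = G.lc {..<r} v std" using v by (auto simp: fun_eq_iff std_lc Kvecs_def)
    thus "v \<in> G.span {..<r} std" unfolding G.span_def using v by (auto simp: Kvecs_def)
  qed
  show "G.span {..<r} std \<subseteq> Kvecs K r"
    unfolding G.span_def Kvecs_def using G.Kc(1) by (auto simp: std_lc)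
qed

lemma std_indep: "G.indep {..<r} std"
  unfolding G.indep_def
proof (intro allI impI ballI)
  fix c i assume "G.lc {..<r} c std = 0" "i \<in> {..<r}"
  thus "c i = 0" using std_lc[of r c i] by (metis lessThan_iff zero_fun_apply)
qed

lemma Kvecs_fin: "finite (Kvecs K r)" unfolding Kvecs_span by (rule G.finite_span) simp

lemma qbinom_count: "qbinom K r s * hq (card K) s s = hq (card K) r s"
proof -
  let ?q = "card K"
  define Q where "Q = {V. is_Ksubspace K r V \<and> has_Kdim K V s}"
  define Bs where "Bs = {g \<in> PiE {..<s} (\<lambda>_. Kvecs K r). G.indep {..<s} g}"
  define Fb where "Fb V = {g \<in> PiE {..<s} (\<lambda>_. V). G.indep {..<s} g}" for V
  have cBs: "card Bs = hq ?q r s" unfolding Bs_def hq_def Kvecs_span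
    using G.count_indep[of "{..<r}" std "{..<s}"] std_indep by simp
  have z0: "(\<lambda>_. 0) = (0::nat\<Rightarrow>'a)" by (simp add: fun_eq_iff)
  have QV: "\<exists>vs. G.indep {..<s} vs \<and> V = G.span {..<s} vs" if "V \<in> Q" for V
  proof -
    have hk: "has_Kdim K V s" using that unfolding Q_def by simp
    obtain vs where vs: "\<forall>c. (\<forall>j<s. c j \<in> K) \<longrightarrow> Kcomb c vs s = (\<lambda>_. 0) \<longrightarrow> (\<forall>j<s. c j = 0)"
       "V = {Kcomb c vs s | c. \<forall>j<s. c j \<in> K}" using hk unfolding has_Kdim_def by blast
    have "G.indep {..<s} vs" unfolding G.indep_def
    proof (intro allI impI)
      fix c assume "\<forall>i\<in>{..<s}. c i \<in> K" "G.lc {..<s} c vs = 0"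
      thus "\<forall>i\<in>{..<s}. c i = 0" using vs(1)[rule_format, of c] unfolding Kcomb_eq z0 by simp
    qed
    moreover have "V = G.span {..<s} vs" unfolding G.span_def vs(2) Kcomb_eq by (simp only: Ball_def lessThan_iff)
    ultimately show ?thesis by blast
  qed
  have spanQ: "G.span {..<s} g = V" if VQ: "V \<in> Q" and gF: "g \<in> Fb V" for V g
  proof -
    obtain vs where vs: "G.indep {..<s} vs" "V = G.span {..<s} vs" using QV[OF VQ] by blast
    show ?thesis using gF unfolding Fb_def vs(2)
      by (intro G.span_eq_card) (auto simp: PiE_iff)
  qed
  have cFb: "card (Fb V) = hq ?q s s" if VQ: "V \<in> Q" for V
  proof -
    obtain vs where vs: "G.indep {..<s} vs" "V = G.span {..<s} vs" using QV[OF VQ] by blast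
    show ?thesis unfolding Fb_def hq_def vs(2) using G.count_indep[of "{..<s}" vs "{..<s}"] vs(1) by simp
  qed
  have QK: "V \<subseteq> Kvecs K r" if "V \<in> Q" for V using that unfolding Q_def is_Ksubspace_def by blast
  have finQ: "finite Q"
  proof -
    have "Q \<subseteq> Pow (Kvecs K r)" using QK by blast
    thus ?thesis using Kvecs_fin by (meson finite_Pow_iff finite_subset)
  qed
  have finFb: "finite (Fb V)" if "V \<in> Q" for V
  proof -
    have "finite V" using QK[OF that] Kvecs_fin finite_subset by blast
    thus ?thesis unfolding Fb_def by (intro finite_subset[OF _ finite_PiE[of "{..<s}" "\<lambda>_. V"]]) auto
  qed
  have bij: "bij_betw snd (Sigma Q Fb) Bs"
    unfolding bij_betw_def
  proof
    show "inj_on snd (Sigma Q Fb)"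
    proof (rule inj_onI)
      fix p p' assume p: "p \<in> Sigma Q Fb" "p' \<in> Sigma Q Fb" "snd p = snd p'"
      obtain V g where 1: "p = (V, g)" "V \<in> Q" "g \<in> Fb V" using p(1) by blast
      obtain V' g' where 2: "p' = (V', g')" "V' \<in> Q" "g' \<in> Fb V'" using p(2) by blast
      have "g = g'" using p(3) 1 2 by simp
      moreover have "V = V'" using spanQ[OF 1(2,3)] spanQ[OF 2(2,3)] \<open>g = g'\<close> by simp
      ultimately show "p = p'" using 1 2 by simp
    qed
    show "snd ` Sigma Q Fb = Bs"
    proof
      show "snd ` Sigma Q Fb \<subseteq> Bs" unfolding Bs_def Fb_def using QK by (fastforce simp: PiE_iff)
      show "Bs \<subseteq> snd ` Sigma Q Fb"
      proof
        fix g assume g: "g \<in> Bs"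
        let ?V = "G.span {..<s} g"
        have gK: "\<And>j. j < s \<Longrightarrow> g j \<in> Kvecs K r" using g unfolding Bs_def by auto
        have ind: "G.indep {..<s} g" using g unfolding Bs_def by auto
        have sub: "?V \<subseteq> Kvecs K r" unfolding Kvecs_span
          by (rule G.span_mono[OF _ G.subsp_span]) (use gK Kvecs_span in auto)
        have ss: "G.subsp ?V" by (rule G.subsp_span)
        have "is_Ksubspace K r ?V" unfolding is_Ksubspace_def
        proof (intro conjI ballI sub)
          show "(\<lambda>_. 0) \<in> ?V" using G.subsp_0[OF ss] unfolding z0 .
          show "(\<lambda>i. u i + v i) \<in> ?V" if "u \<in> ?V" "v \<in> ?V" for u v
            using G.subsp_add[OF ss that] by (simp add: plus_fun_def)
          show "(\<lambda>i. a * v i) \<in> ?V" if "a \<in> K" "v \<in> ?V" for a v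
            using G.subsp_sm[OF ss that] by simp
        qed
        moreover have "has_Kdim K ?V s" unfolding has_Kdim_def
        proof (intro exI[of _ g] conjI)
          show "\<forall>j<s. g j \<in> ?V" by (auto intro: G.in_span)
          show "\<forall>c. (\<forall>j<s. c j \<in> K) \<longrightarrow> Kcomb c g s = (\<lambda>_. 0) \<longrightarrow> (\<forall>j<s. c j = 0)"
          proof (rule allI, rule impI, rule impI)
            fix c assume "\<forall>j<s. c j \<in> K" "Kcomb c g s = (\<lambda>_. 0)"
            thus "\<forall>j<s. c j = 0"
              using ind[unfolded G.indep_def, rule_format, of c] unfolding Kcomb_eq z0 by simp
          qed
          show "?V = {Kcomb c g s |c. \<forall>j<s. c j \<in> K}" unfolding G.span_def Kcomb_eq by (simp only: Ball_def lessThan_iff)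
        qed
        ultimately have "?V \<in> Q" unfolding Q_def by blast
        moreover have "g \<in> Fb ?V" unfolding Fb_def using g ind unfolding Bs_def
          by (auto simp: PiE_iff intro: G.in_span)
        ultimately have "(?V, g) \<in> Sigma Q Fb" by blast
        thus "g \<in> snd ` Sigma Q Fb" by force
      qed
    qed
  qed
  have "card Bs = card (Sigma Q Fb)" using bij_betw_same_card[OF bij] by simp
  also have "\<dots> = (\<Sum>V\<in>Q. card (Fb V))" using finQ finFb by (simp add: card_SigmaI)
  also have "\<dots> = card Q * hq ?q s s" using cFb by simp
  finally show ?thesis using cBs unfolding qbinom_def Q_def by simp
qed

end



context
  fixes K :: "'a::{field,finite} set" and n r s :: nat and c1 c2 :: "nat \<Rightarrow> 'a" and T :: "nat set"
  assumes sf: "is_subfield K" and c1v: "c1 \<in> vecspace n" and c2v: "c2 \<in> vecspace n"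
    and sr: "s \<le> r"
    and Tn: "T \<subseteq> {..<n}" and Ti: "kmod.indep K (*) T (\<lambda>i. c1 i - c2 i)" and Tc: "card T = r"
    and Ts: "\<forall>i<n. c1 i - c2 i \<in> kmod.span K (*) T (\<lambda>i. c1 i - c2 i)"
begin

interpretation F: kmod K "(*) :: 'a \<Rightarrow> 'a \<Rightarrow> 'a" by (rule kmod_field[OF sf])

lemma fib_card:
  assumes xv: "x \<in> vecspace n" and xu: "rk K n (\<lambda>i. c1 i - x i) \<le> s" and xw: "rk K n (\<lambda>i. c2 i - x i) \<le> r - s"
  shows "card {f \<in> PiE {..<r} (\<lambda>_. F.span T (\<lambda>i. c1 i - c2 i)). F.indep {..<r} f \<and>
      (\<forall>i<n. c1 i - x i \<in> F.span {..<s} f \<and> c2 i - x i \<in> F.span {s..<r} f)}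
    = hq (card K) s s * hq (card K) (r - s) (r - s)"
proof -
  let ?q = "card K"
  define e where "e = (\<lambda>i. c1 i - c2 i)"
  define u where "u = (\<lambda>i. c1 i - x i)"
  define w where "w = (\<lambda>i. c2 i - x i)"
  define W where "W = F.span T e"
  have fT: "finite T" using Tn finite_subset by blast
  have cW: "card W = ?q ^ r" unfolding W_def e_def using F.card_span_indep[OF fT Ti] Tc by simp
  have finW: "finite W" unfolding W_def using fT by (rule F.finite_span)
  obtain Tu where Tu: "Tu \<subseteq> {..<n}" "F.indep Tu u" "card Tu = rk K n u" "\<forall>i<n. u i \<in> F.span Tu u"
    using rk_basis[OF sf, of n u] by blast
  obtain Tw where Tw: "Tw \<subseteq> {..<n}" "F.indep Tw w" "card Tw = rk K n w" "\<forall>i<n. w i \<in> F.span Tw w"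
    using rk_basis[OF sf, of n w] by blast
  have fTu: "finite Tu" using Tu(1) finite_subset by blast
  have fTw: "finite Tw" using Tw(1) finite_subset by blast
  define Su where "Su = F.span Tu u"
  define Sw where "Sw = F.span Tw w"
  have finSu: "finite Su" unfolding Su_def using fTu by (rule F.finite_span)
  have finSw: "finite Sw" unfolding Sw_def using fTw by (rule F.finite_span)
  have cSu: "card Su = ?q ^ card Tu" unfolding Su_def using fTu Tu(2) by (rule F.card_span_indep)
  have cSw: "card Sw = ?q ^ card Tw" unfolding Sw_def using fTw Tw(2) by (rule F.card_span_indep)
  have ssu: "F.subsp Su" unfolding Su_def by (rule F.subsp_span)
  have ssw: "F.subsp Sw" unfolding Sw_def by (rule F.subsp_span)
  define Sg where "Sg = (\<lambda>(a, b). a + b) ` (Su \<times> Sw)"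
  have memSg: "a + b \<in> Sg" if "a \<in> Su" "b \<in> Sw" for a b unfolding Sg_def using that by force
  have ssg: "F.subsp Sg" unfolding F.subsp_def
  proof (intro conjI ballI)
    show "0 \<in> Sg" using memSg[OF F.subsp_0[OF ssu] F.subsp_0[OF ssw]] by simp
  next
    fix y z assume "y \<in> Sg" "z \<in> Sg"
    then obtain a b a' b' where ab: "a \<in> Su" "b \<in> Sw" "y = a + b" "a' \<in> Su" "b' \<in> Sw" "z = a' + b'"
      unfolding Sg_def by auto
    have eq: "y + z = (a + a') + (b + b')" using ab by (simp add: algebra_simps)
    have "(a + a') + (b + b') \<in> Sg" by (rule memSg[OF F.subsp_add[OF ssu ab(1,4)] F.subsp_add[OF ssw ab(2,5)]])
    thus "y + z \<in> Sg" unfolding eq .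
  next
    fix k y assume k: "k \<in> K" and "y \<in> Sg"
    then obtain a b where ab: "a \<in> Su" "b \<in> Sw" "y = a + b" unfolding Sg_def by auto
    have eq: "k * y = k * a + k * b" using ab by (simp add: algebra_simps)
    have "k * a + k * b \<in> Sg" by (rule memSg[OF F.subsp_sm[OF ssu k ab(1)] F.subsp_sm[OF ssw k ab(2)]])
    thus "k * y \<in> Sg" unfolding eq .
  qed
  have WSg: "W \<subseteq> Sg" unfolding W_def
  proof (rule F.span_mono[OF _ ssg])
    fix t assume t: "t \<in> T"
    hence tn: "t < n" using Tn by auto
    have "e t = u t + (- w t)" unfolding e_def u_def w_def by simp
    moreover have "u t \<in> Su" unfolding Su_def using Tu(4) tn by blast
    moreover have "- w t \<in> Sw" unfolding Sw_def using Tw(4) tn F.subsp_neg[OF F.subsp_span] by blast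
    ultimately show "e t \<in> Sg" using memSg by metis
  qed
  have finSg: "finite Sg" unfolding Sg_def using finSu finSw by simp
  have q1: "?q \<ge> 2" by (rule F.q_ge2)
  have rku: "card Tu \<le> s" using Tu(3) xu unfolding u_def by simp
  have rkw: "card Tw \<le> r - s" using Tw(3) xw unfolding w_def by simp
  have "card Sg \<le> card (Su \<times> Sw)" unfolding Sg_def by (rule card_image_le) (simp add: finSu finSw)
  also have "\<dots> = ?q ^ (card Tu + card Tw)" by (simp add: card_cartesian_product cSu cSw power_add)
  finally have cSg: "card Sg \<le> ?q ^ (card Tu + card Tw)" .
  have "?q ^ (card Tu + card Tw) \<le> ?q ^ r" using rku rkw sr q1 by (intro power_increasing) auto
  hence "card Sg \<le> card W" using cSg cW by simp
  hence WeqSg: "W = Sg" using card_seteq[OF finSg WSg] by blast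
  have "?q ^ r \<le> ?q ^ (card Tu + card Tw)" using cSg cW WeqSg by simp
  hence "r \<le> card Tu + card Tw" using q1 by (simp add: power_le_imp_le_exp)
  hence cTu: "card Tu = s" and cTw: "card Tw = r - s" using rku rkw sr by auto
  have SuW: "Su \<subseteq> W"
  proof
    fix a assume "a \<in> Su" thus "a \<in> W" using memSg[of a 0] F.subsp_0[OF ssw] WeqSg by simp
  qed
  have SwW: "Sw \<subseteq> W"
  proof
    fix a assume "a \<in> Sw" thus "a \<in> W" using memSg[of 0 a] F.subsp_0[OF ssu] WeqSg by simp
  qed
  define Bu where "Bu = {g \<in> PiE {..<s} (\<lambda>_. Su). F.indep {..<s} g}"
  define Bw where "Bw = {g \<in> PiE {s..<r} (\<lambda>_. Sw). F.indep {s..<r} g}"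
  have cBu: "card Bu = hq ?q s s" unfolding Bu_def Su_def hq_def
    using F.count_indep[OF fTu Tu(2), of "{..<s}"] cTu by simp
  have cBw: "card Bw = hq ?q (r - s) (r - s)" unfolding Bw_def Sw_def hq_def
    using F.count_indep[OF fTw Tw(2), of "{s..<r}"] cTw by simp
  define Fb where "Fb = {f \<in> PiE {..<r} (\<lambda>_. W). F.indep {..<r} f \<and>
      (\<forall>i<n. c1 i - x i \<in> F.span {..<s} f \<and> c2 i - x i \<in> F.span {s..<r} f)}"
  define \<rho> where "\<rho> f = (restrict f {..<s}, restrict f {s..<r})" for f :: "nat \<Rightarrow> 'a"
  define \<phi> where "\<phi> p = (\<lambda>i. if i < s then fst p i else snd p i)" for p :: "(nat \<Rightarrow> 'a) \<times> (nat \<Rightarrow> 'a)"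
  have un: "{..<s} \<union> {s..<r} = {..<r}" using sr by auto
  have sub1: "{..<s} \<subseteq> {..<r}" using sr by (intro subsetI) simp
  have sub2: "{s..<r} \<subseteq> {..<r}" by (intro subsetI) simp
  have bij: "bij_betw \<rho> Fb (Bu \<times> Bw)"
  proof (rule bij_betw_byWitness[where f' = \<phi>])
    show "\<forall>f\<in>Fb. \<phi> (\<rho> f) = f"
    proof
      fix f assume "f \<in> Fb"
      hence "f \<in> extensional {..<r}" unfolding Fb_def by (auto simp: PiE_iff)
      thus "\<phi> (\<rho> f) = f" unfolding \<phi>_def \<rho>_def by (auto simp: fun_eq_iff extensional_def)
    qed
    show "\<forall>p\<in>Bu \<times> Bw. \<rho> (\<phi> p) = p"
    proof
      fix p assume "p \<in> Bu \<times> Bw"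
      hence e1: "fst p \<in> extensional {..<s}" and e2: "snd p \<in> extensional {s..<r}"
        unfolding Bu_def Bw_def by (auto simp: PiE_iff)
      have "restrict (\<phi> p) {..<s} = fst p" using e1 unfolding \<phi>_def by (auto simp: fun_eq_iff extensional_def)
      moreover have "restrict (\<phi> p) {s..<r} = snd p" using e2 unfolding \<phi>_def by (auto simp: fun_eq_iff extensional_def)
      ultimately show "\<rho> (\<phi> p) = p" unfolding \<rho>_def by simp
    qed
    show "\<rho> ` Fb \<subseteq> Bu \<times> Bw"
    proof
      fix p assume "p \<in> \<rho> ` Fb"
      then obtain f where f: "f \<in> Fb" "p = \<rho> f" by blast
      have fP: "f \<in> PiE {..<r} (\<lambda>_. W)" and fi: "F.indep {..<r} f"
        and fc: "\<forall>i<n. u i \<in> F.span {..<s} f \<and> w i \<in> F.span {s..<r} f"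
        using f(1) unfolding Fb_def u_def w_def by auto
      have i1: "F.indep {..<s} f" using F.indep_subset[OF fi, of "{..<s}"] sr by auto
      have "{s..<r} \<subseteq> {..<r}" by (intro subsetI) simp
      hence i2: "F.indep {s..<r} f" using F.indep_subset[OF fi, of "{s..<r}"] by simp
      have s1: "Su = F.span {..<s} f" unfolding Su_def
        using Tu(1) fc cTu by (intro F.span_eq_card[OF fTu _ Tu(2)]) auto
      have s2: "Sw = F.span {s..<r} f" unfolding Sw_def
        using Tw(1) fc cTw by (intro F.span_eq_card[OF fTw _ Tw(2)]) auto
      have "restrict f {..<s} \<in> Bu" unfolding Bu_def s1
        using i1 F.indep_cong[of "{..<s}" "restrict f {..<s}" f] by (auto intro: F.in_span)
      moreover have "restrict f {s..<r} \<in> Bw" unfolding Bw_def s2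
        using i2 F.indep_cong[of "{s..<r}" "restrict f {s..<r}" f] by (auto intro: F.in_span)
      ultimately show "p \<in> Bu \<times> Bw" using f(2) unfolding \<rho>_def by simp
    qed
    show "\<phi> ` (Bu \<times> Bw) \<subseteq> Fb"
    proof
      fix f assume "f \<in> \<phi> ` (Bu \<times> Bw)"
      then obtain g h where gh: "g \<in> Bu" "h \<in> Bw" "f = \<phi> (g, h)" by blast
      have fg: "\<And>i. i < s \<Longrightarrow> f i = g i" and fh: "\<And>i. s \<le> i \<Longrightarrow> f i = h i"
        using gh(3) unfolding \<phi>_def by auto
      have gP: "g \<in> PiE {..<s} (\<lambda>_. Su)" "F.indep {..<s} g" using gh(1) unfolding Bu_def by auto
      have hP: "h \<in> PiE {s..<r} (\<lambda>_. Sw)" "F.indep {s..<r} h" using gh(2) unfolding Bw_def by auto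
      have sg: "F.span {..<s} f = Su"
      proof -
        have "F.span {..<s} f = F.span {..<s} g" using fg by (intro F.span_cong) auto
        also have "\<dots> = Su" unfolding Su_def using gP cTu
          by (intro F.span_eq_card[OF _ fTu]) (auto simp: PiE_iff Su_def)
        finally show ?thesis .
      qed
      have sh: "F.span {s..<r} f = Sw"
      proof -
        have "F.span {s..<r} f = F.span {s..<r} h" using fh by (intro F.span_cong) auto
        also have "\<dots> = Sw" unfolding Sw_def using hP cTw
          by (intro F.span_eq_card[OF _ fTw]) (auto simp: PiE_iff Sw_def)
        finally show ?thesis .
      qed
      have fPi: "f \<in> PiE {..<r} (\<lambda>_. W)"
      proof (rule PiE_I)
        fix i assume "i \<in> {..<r}"
        show "f i \<in> W"
        proof (cases "i < s")
          case True thus ?thesis using fg gP SuW by (auto simp: PiE_iff)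
        next
          case False thus ?thesis using fh hP SwW \<open>i \<in> {..<r}\<close> by (auto simp: PiE_iff)
        qed
      next
        fix i assume "i \<notin> {..<r}"
        thus "f i = undefined" using fh hP sr by (auto simp: PiE_iff extensional_def)
      qed
      have "W \<subseteq> F.span {..<r} f"
      proof
        fix y assume "y \<in> W"
        then obtain a b where ab: "a \<in> Su" "b \<in> Sw" "y = a + b" unfolding WeqSg Sg_def by auto
        have "a \<in> F.span {..<r} f" using ab(1) sg F.span_sub[OF sub1, of f] by auto
        moreover have "b \<in> F.span {..<r} f" using ab(2) sh F.span_sub[OF sub2, of f] by auto
        ultimately show "y \<in> F.span {..<r} f" using ab(3) F.subsp_add[OF F.subsp_span] by blast
      qed
      hence "card W \<le> card (F.span {..<r} f)" by (intro card_mono F.finite_span) auto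
      hence fi: "F.indep {..<r} f" using cW by (intro F.indep_of_card) auto
      have "\<forall>i<n. c1 i - x i \<in> F.span {..<s} f \<and> c2 i - x i \<in> F.span {s..<r} f"
        using sg sh Tu(4) Tw(4) unfolding Su_def Sw_def u_def w_def by auto
      thus "f \<in> Fb" unfolding Fb_def using fPi fi by blast
    qed
  qed
  have "card Fb = card (Bu \<times> Bw)" using bij by (rule bij_betw_same_card)
  thus ?thesis unfolding Fb_def W_def e_def using cBu cBw by (simp add: card_cartesian_product)
qed

lemma main_count:
  "card {x \<in> vecspace n. rk K n (\<lambda>i. c1 i - x i) \<le> s \<and> rk K n (\<lambda>i. c2 i - x i) \<le> r - s}
     * (hq (card K) s s * hq (card K) (r - s) (r - s)) = hq (card K) r r"
proof -
  let ?q = "card K"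
  define e where "e = (\<lambda>i. c1 i - c2 i)"
  define W where "W = F.span T e"
  define X where "X = {x \<in> vecspace n. rk K n (\<lambda>i. c1 i - x i) \<le> s \<and> rk K n (\<lambda>i. c2 i - x i) \<le> r - s}"
  define BW where "BW = {f \<in> PiE {..<r} (\<lambda>_. W). F.indep {..<r} f}"
  define cond where "cond x f \<longleftrightarrow> (\<forall>i<n. c1 i - x i \<in> F.span {..<s} f \<and> c2 i - x i \<in> F.span {s..<r} f)"
    for x f
  define Fib where "Fib x = {f \<in> BW. cond x f}" for x
  have fT: "finite T" using Tn finite_subset by blast
  have finW: "finite W" unfolding W_def using fT by (rule F.finite_span)
  have Ti': "F.indep T e" using Ti unfolding e_def .
  have cBW: "card BW = hq ?q r r" unfolding BW_def W_def hq_def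
    using F.count_indep[OF fT Ti', of "{..<r}"] Tc by simp
  have un: "{..<s} \<union> {s..<r} = {..<r}" using sr by auto
  have sub1: "{..<s} \<subseteq> {..<r}" using sr by (intro subsetI) simp
  have finBW: "finite BW" unfolding BW_def
    by (rule finite_subset[OF _ finite_PiE[of "{..<r}" "\<lambda>_. W"]]) (use finW in auto)
  have finX: "finite X" unfolding X_def by (rule finite_subset[OF _ finite_vecspace[of n]]) auto
  have cFib: "card (Fib x) = hq ?q s s * hq ?q (r - s) (r - s)" if "x \<in> X" for x
    using fib_card[of x] that unfolding Fib_def BW_def cond_def X_def W_def e_def
    by (simp add: conj_assoc)
  have bij: "bij_betw snd (Sigma X Fib) BW"
    unfolding bij_betw_def
  proof
    show "inj_on snd (Sigma X Fib)"
    proof (rule inj_onI)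
      fix p p' assume p: "p \<in> Sigma X Fib" "p' \<in> Sigma X Fib" "snd p = snd p'"
      obtain x f where 1: "p = (x, f)" "x \<in> X" "f \<in> Fib x" using p(1) by blast
      obtain x' f' where 2: "p' = (x', f')" "x' \<in> X" "f' \<in> Fib x'" using p(2) by blast
      have ff: "f' = f" using p(3) 1 2 by simp
      have fi: "F.indep ({..<s} \<union> {s..<r}) f" using 1(3) unfolding Fib_def BW_def un by simp
      have c: "cond x f" "cond x' f" using 1(3) 2(3) ff unfolding Fib_def by auto
      have "x i = x' i" for i
      proof (cases "i < n")
        case True
        have "x' i - x i = (c1 i - x i) - (c1 i - x' i)" by simp
        hence a: "x' i - x i \<in> F.span {..<s} f"
          using c True unfolding cond_def by (metis F.subsp_diff F.subsp_span)
        have "x' i - x i = (c2 i - x i) - (c2 i - x' i)" by simp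
        hence b: "x' i - x i \<in> F.span {s..<r} f"
          using c True unfolding cond_def by (metis F.subsp_diff F.subsp_span)
        have "x' i - x i = 0" by (rule F.span_inter[OF _ _ _ fi a b]) auto
        thus ?thesis by simp
      next
        case False
        thus ?thesis using 1(2) 2(2) unfolding X_def vecspace_def by auto
      qed
      hence "x = x'" by (simp add: fun_eq_iff)
      thus "p = p'" using 1 2 ff by simp
    qed
    show "snd ` Sigma X Fib = BW"
    proof
      show "snd ` Sigma X Fib \<subseteq> BW" unfolding Fib_def by auto
      show "BW \<subseteq> snd ` Sigma X Fib"
      proof
        fix f assume f: "f \<in> BW"
        have fP: "f \<in> PiE {..<r} (\<lambda>_. W)" and fi: "F.indep {..<r} f" using f unfolding BW_def by auto
        have spW: "F.span {..<r} f = W" unfolding W_def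
          using fP Tc by (intro F.span_eq_card[OF _ fT fi]) (auto simp: PiE_iff W_def)
        have ex: "\<exists>c. (\<forall>j\<in>{..<r}. c j \<in> K) \<and> e i = F.lc {..<r} c f" if "i < n" for i
        proof -
          have "e i \<in> F.span {..<r} f" using Ts that spW unfolding W_def e_def by simp
          thus ?thesis unfolding F.span_def by blast
        qed
        define C where "C i = (SOME c. (\<forall>j\<in>{..<r}. c j \<in> K) \<and> e i = F.lc {..<r} c f)" for i
        have C: "(\<forall>j\<in>{..<r}. C i j \<in> K) \<and> e i = F.lc {..<r} (C i) f" if "i < n" for i
          unfolding C_def using someI_ex[OF ex[OF that]] .
        define x where "x = (\<lambda>i. if i < n then c1 i - F.lc {..<s} (C i) f else 0)"
        have x1: "c1 i - x i \<in> F.span {..<s} f" if "i < n" for i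
        proof -
          have "c1 i - x i = F.lc {..<s} (C i) f" unfolding x_def using that by simp
          moreover have "\<forall>j\<in>{..<s}. C i j \<in> K" using C[OF that] sr by auto
          ultimately show ?thesis unfolding F.span_def by blast
        qed
        have x2: "c2 i - x i \<in> F.span {s..<r} f" if "i < n" for i
        proof -
          have "e i = F.lc {..<s} (C i) f + F.lc {s..<r} (C i) f" using C[OF that] F.lc_split[OF sr] by simp
          hence "c2 i - x i = - F.lc {s..<r} (C i) f" unfolding x_def e_def using that
            by (simp add: algebra_simps)
          also have "\<dots> = F.lc {s..<r} (\<lambda>j. - C i j) f" by (rule F.lc_neg)
          finally have eq: "c2 i - x i = F.lc {s..<r} (\<lambda>j. - C i j) f" .
          have "\<forall>j\<in>{s..<r}. - C i j \<in> K" using C[OF that] F.Kc(5) by auto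
          thus ?thesis unfolding eq F.span_def by blast
        qed
        have xv: "x \<in> vecspace n" unfolding x_def vecspace_def by simp
        have r1: "rk K n (\<lambda>i. c1 i - x i) \<le> s"
        proof (rule rk_le[OF sf])
          fix T' assume T': "T' \<subseteq> {..<n}" "F.indep T' (\<lambda>i. c1 i - x i)"
          have "card T' \<le> card {..<s}" using T' x1 finite_subset[OF T'(1)]
            by (intro F.indep_card_le[of T' "{..<s}" _ f]) auto
          thus "card T' \<le> s" by simp
        qed
        have r2: "rk K n (\<lambda>i. c2 i - x i) \<le> r - s"
        proof (rule rk_le[OF sf])
          fix T' assume T': "T' \<subseteq> {..<n}" "F.indep T' (\<lambda>i. c2 i - x i)"
          have "card T' \<le> card {s..<r}" using T' x2 finite_subset[OF T'(1)]
            by (intro F.indep_card_le[of T' "{s..<r}" _ f]) auto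
          thus "card T' \<le> r - s" by simp
        qed
        have "x \<in> X" unfolding X_def using xv r1 r2 by blast
        moreover have "f \<in> Fib x" unfolding Fib_def cond_def using f x1 x2 by blast
        ultimately have "(x, f) \<in> Sigma X Fib" by blast
        thus "f \<in> snd ` Sigma X Fib" by force
      qed
    qed
  qed
  have "card BW = card (Sigma X Fib)" using bij_betw_same_card[OF bij] by simp
  also have "\<dots> = (\<Sum>x\<in>X. card (Fib x))"
    using finX finBW by (intro card_SigmaI) (auto simp: Fib_def)
  also have "\<dots> = card X * (hq ?q s s * hq ?q (r - s) (r - s))" using cFib by simp
  finally show ?thesis unfolding X_def using cBW by simp
qed

end



theorem proposition4:
  fixes K :: "'a::{field,finite} set" and n r s :: nat and c1 c2 :: "nat \<Rightarrow> 'a"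
  assumes "is_subfield K"
    and "c1 \<in> vecspace n" and "c2 \<in> vecspace n"
    and "dR K n c1 c2 = r"
    and "s \<le> r"
  shows "card (rball K n s c1 \<inter> rball K n (r - s) c2) = card K ^ (s * (r - s)) * qbinom K r s"
proof -
  interpret F: kmod K "(*) :: 'a \<Rightarrow> 'a \<Rightarrow> 'a" by (rule kmod_field[OF assms(1)])
  let ?q = "card K"
  have rke: "rk K n (\<lambda>i. c1 i - c2 i) = r" using assms(4) unfolding dR_def .
  obtain T where T: "T \<subseteq> {..<n}" "F.indep T (\<lambda>i. c1 i - c2 i)" "card T = r"
      "\<forall>i<n. c1 i - c2 i \<in> F.span T (\<lambda>i. c1 i - c2 i)"
    using rk_basis[OF assms(1), of n "\<lambda>i. c1 i - c2 i"] rke by auto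
  have X: "rball K n s c1 \<inter> rball K n (r - s) c2 =
      {x \<in> vecspace n. rk K n (\<lambda>i. c1 i - x i) \<le> s \<and> rk K n (\<lambda>i. c2 i - x i) \<le> r - s}"
    unfolding rball_def dR_def by auto
  have mc: "card (rball K n s c1 \<inter> rball K n (r - s) c2) * (hq ?q s s * hq ?q (r - s) (r - s)) = hq ?q r r"
    unfolding X using main_count[OF assms(1,2,3,5) T] .
  have qb: "qbinom K r s * hq ?q s s = hq ?q r s" by (rule qbinom_count[OF assms(1)])
  have hs: "hq ?q r r = ?q ^ (s * (r - s)) * hq ?q r s * hq ?q (r - s) (r - s)"
    by (rule hq_split[OF assms(5)])
  have p1: "hq ?q s s > 0" and p2: "hq ?q (r - s) (r - s) > 0" using hq_pos F.q_ge2 by auto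
  have h2: "hq ?q r r = (?q ^ (s * (r - s)) * qbinom K r s) * (hq ?q s s * hq ?q (r - s) (r - s))"
    unfolding hs qb[symmetric] by (simp add: ac_simps)
  have nz: "hq ?q s s * hq ?q (r - s) (r - s) \<noteq> 0" using p1 p2 by simp
  show ?thesis using mc unfolding h2 using mult_right_cancel[OF nz] by blast
qed


end
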